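(* Let $h\ge-1$ be an integer and $n\ge0$, excluding the case $(n,h)=(0,-1)$. The number of partitions $\lambda\vdash n$ having an $h$-fixed hook arising from a part of size $1$ equals the number of partitions of $n$ in which the part $1$ occurs exactly $h+1$ times. Equivalently, the generating function of the former is $q^{h+1}/(q^2;q)_\infty$ for $h\ge0$ and $1/(q^2;q)_\infty-1$ for $h=-1$.
   Context: A partition $\lambda=(\lambda_1\ge\cdots\ge\lambda_t>0)$ of $n$ has first-column hook lengths $h_{s,1}(\lambda)=\lambda_s+(t-s)$. An $h$-fixed hook arising from a part of size $k$ is an index $s$ with $h_{s,1}(\lambda)=s+h$ and $\lambda_s=k$. Notation: $(a;q)_\infty=\prod_{j\ge0}(1-aq^j)$. *)

theory Defs
  imports Main
begin

text \<open>A partition of n: a weakly decreasing list of positive parts summing to n.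
  Parts are lambda_1 >= ... >= lambda_t, stored as xs ! (s-1) for s = 1..t.\<close>
definition partitions :: "nat \<Rightarrow> nat list set" where
  "partitions n = {xs. sorted_wrt (\<ge>) xs \<and> (\<forall>x\<in>set xs. 0 < x) \<and> sum_list xs = n}"

text \<open>First-column hook length h_{s,1} = lambda_s + (t - s), for 1 <= s <= t.\<close>
definition hook1 :: "nat list \<Rightarrow> nat \<Rightarrow> nat" where
  "hook1 xs s = xs ! (s - 1) + (length xs - s)"

definition has_fixed_hook :: "int \<Rightarrow> nat \<Rightarrow> nat list \<Rightarrow> bool" where
  "has_fixed_hook h k xs \<longleftrightarrow>
     (\<exists>s\<in>{1..length xs}. int (hook1 xs s) = int s + h \<and> xs ! (s - 1) = k)"

end

theory Submission
  imports Defs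
begin
lemma split_thr: "sorted_wrt (\<ge>) (xs::nat list) \<Longrightarrow> xs = filter (\<lambda>x. k \<le> x) xs @ filter (\<lambda>x. x < k) xs"
proof (induction xs)
  case Nil then show ?case by simp
next
  case (Cons x xs)
  show ?case
  proof (cases "k \<le> x")
    case True then show ?thesis using Cons by simp
  next
    case False
    then have "\<forall>y\<in>set xs. \<not> k \<le> y" "\<forall>y\<in>set xs. y < k" using Cons.prems by auto
    then show ?thesis using False by (simp add: filter_id_conv)
  qed
qed

lemma filter_eq_rep: "filter (\<lambda>x. x = c) xs = replicate (count_list xs c) c"
  by (induction xs) auto

lemma sorted_rep[simp]: "sorted_wrt (\<lambda>x y. y \<le> x) (replicate n (c::nat))"
  by (induction n) auto

lemma count_rep: "count_list (replicate n x) y = (if x = y then n else 0)"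
  by (induction n) auto

lemma count_zero: "y \<notin> set xs \<Longrightarrow> count_list xs y = 0"
  by (induction xs) auto

lemma sum_minus1: "\<forall>x\<in>set ys. 1 \<le> x \<Longrightarrow> sum_list (map (\<lambda>x. x - 1) ys) + length ys = sum_list (ys::nat list)"
  by (induction ys) auto

lemma sum_Suc: "sum_list (map Suc ys) = sum_list ys + length ys"
  by (induction ys) auto

lemma decomp2:
  assumes "sorted_wrt (\<ge>) xs" "\<forall>x\<in>set xs. 0 < (x::nat)"
  shows "xs = filter (\<lambda>x. 2 \<le> x) xs @ replicate (count_list xs 1) 1"
proof -
  have "filter (\<lambda>x. x < 2) xs = filter (\<lambda>x. x = 1) xs"
    using assms(2) by (intro filter_cong) auto
  then show ?thesis using split_thr[OF assms(1), of 2] filter_eq_rep[of 1 xs] by simp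
qed

lemma decomp3:
  assumes "sorted_wrt (\<ge>) xs" "\<forall>x\<in>set xs. 0 < (x::nat)"
  shows "xs = filter (\<lambda>x. 3 \<le> x) xs @ replicate (count_list xs 2) 2 @ replicate (count_list xs 1) 1"
proof -
  let ?y = "filter (\<lambda>x. x < 3) xs"
  have s: "sorted_wrt (\<ge>) ?y" using assms(1) by (simp add: sorted_wrt_filter)
  have 1: "filter (\<lambda>x. 2 \<le> x) ?y = filter (\<lambda>x. x = 2) xs"
    by (simp add: filter_filter) (intro filter_cong, auto)
  have 2: "filter (\<lambda>x. x < 2) ?y = filter (\<lambda>x. x = 1) xs"
    using assms(2) by (simp add: filter_filter) (intro filter_cong, auto)
  have "?y = filter (\<lambda>x. x = 2) xs @ filter (\<lambda>x. x = 1) xs"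
    using split_thr[OF s, of 2] 1 2 by simp
  then show ?thesis using split_thr[OF assms(1), of 3] filter_eq_rep[of 2 xs] filter_eq_rep[of 1 xs] by simp
qed

lemma hook_char:
  assumes "\<forall>x\<in>set v. 2 \<le> (x::nat)"
  shows "has_fixed_hook h 1 (v @ replicate m 1) \<longleftrightarrow>
    (\<exists>s. length v + 1 \<le> s \<and> s \<le> length v + m \<and> int (1 + (length v + m - s)) = int s + h)"
proof
  assume "has_fixed_hook h 1 (v @ replicate m 1)"
  then obtain s where s: "s \<in> {1..length v + m}"
    "int ((v @ replicate m 1) ! (s - 1) + (length v + m - s)) = int s + h"
    "(v @ replicate m 1) ! (s - 1) = 1"
    unfolding has_fixed_hook_def hook1_def by auto
  have "\<not> s - 1 < length v"
  proof
    assume a: "s - 1 < length v"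
    then have "(v @ replicate m 1) ! (s - 1) = v ! (s - 1)" by (simp add: nth_append)
    moreover have "v ! (s - 1) \<ge> 2" using assms a by auto
    ultimately show False using s(3) by simp
  qed
  then show "\<exists>s. length v + 1 \<le> s \<and> s \<le> length v + m \<and> int (1 + (length v + m - s)) = int s + h"
    using s by (intro exI[of _ s]) auto
next
  assume "\<exists>s. length v + 1 \<le> s \<and> s \<le> length v + m \<and> int (1 + (length v + m - s)) = int s + h"
  then obtain s where s: "length v + 1 \<le> s" "s \<le> length v + m" "int (1 + (length v + m - s)) = int s + h" by blast
  have "\<not> s - 1 < length v" using s(1) by arith
  then have n: "(v @ replicate m 1) ! (s - 1) = 1" using s by (simp add: nth_append)
  show "has_fixed_hook h 1 (v @ replicate m 1)"
    unfolding has_fixed_hook_def hook1_def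
    using s n by (intro bexI[of _ s]) auto
qed

theorem theorem3p2:
  fixes h :: int and n :: nat
  assumes "h \<ge> -1" and "\<not> (n = 0 \<and> h = -1)"
  shows "card {xs \<in> partitions n. has_fixed_hook h 1 xs}
       = card {xs \<in> partitions n. count_list xs 1 = nat (h + 1)}"
proof -
  define h1 where "h1 = nat (h + 1)"
  have hh: "h = int h1 - 1" using assms(1) unfolding h1_def by simp
  define A where "A = {xs \<in> partitions n. has_fixed_hook h 1 xs}"
  define B where "B = {xs \<in> partitions n. count_list xs 1 = h1}"
  define f where "f xs = map (\<lambda>x. x - 1) (filter (\<lambda>x. 3 \<le> x) xs) @
      replicate (length (filter (\<lambda>x. 3 \<le> x) xs) + h1 + 2 * count_list xs 2) (1::nat)" for xs
  define g where "g ys = map Suc (filter (\<lambda>x. 2 \<le> x) ys) @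
      replicate ((count_list ys 1 - length (filter (\<lambda>x. 2 \<le> x) ys) - h1) div 2) 2 @
      replicate h1 (1::nat)" for ys
  have fB: "f xs \<in> A \<and> g (f xs) = xs" if xB: "xs \<in> B" for xs
  proof -
    have srt: "sorted_wrt (\<ge>) xs" and pos: "\<forall>x\<in>set xs. 0 < x" and sm: "sum_list xs = n"
      and c1: "count_list xs 1 = h1"
      using xB unfolding B_def partitions_def by auto
    define a3 where "a3 = filter (\<lambda>x. 3 \<le> x) xs"
    define c2 where "c2 = count_list xs 2"
    define v where "v = map (\<lambda>x. x - 1) a3"
    define k where "k = length a3 + h1 + 2 * c2"
    have dec: "xs = a3 @ replicate c2 2 @ replicate h1 1"
      using decomp3[OF srt pos] c1 unfolding a3_def c2_def by simp
    have fx: "f xs = v @ replicate k 1" unfolding f_def v_def k_def a3_def c2_def by simp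
    have a3s: "sorted_wrt (\<ge>) a3" unfolding a3_def using srt by (simp add: sorted_wrt_filter)
    have a3ge: "\<forall>x\<in>set a3. 3 \<le> x" unfolding a3_def by simp
    have vge: "\<forall>x\<in>set v. 2 \<le> x" unfolding v_def using a3ge by auto
    have vs: "sorted_wrt (\<ge>) v" unfolding v_def using a3s
      by (auto simp: sorted_wrt_map elim!: sorted_wrt_mono_rel[rotated])
    have lv: "length v = length a3" unfolding v_def by simp
    have sumv: "sum_list v + length a3 = sum_list a3"
      unfolding v_def using sum_minus1[of a3] a3ge by (metis le_trans one_le_numeral)
    have sumxs: "sum_list xs = sum_list a3 + 2 * c2 + h1"
      by (subst dec) (simp add: sum_list_replicate)
    have part: "f xs \<in> partitions n"
      unfolding partitions_def fx
      using vs vge sumv sumxs sm by (auto simp: sorted_wrt_append k_def sum_list_replicate)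
    have ne: "length a3 + c2 + h1 \<ge> 1"
    proof (rule ccontr)
      assume na: "\<not> ?thesis"
      then have "length a3 = 0" "c2 = 0" "h1 = 0" by linarith+
      then have "xs = []" using dec by simp
      then have "n = 0" using sm by simp
      moreover have "h = -1" using na hh by simp
      ultimately show False using assms(2) by simp
    qed
    have hook: "has_fixed_hook h 1 (f xs)"
      unfolding fx using hook_char[OF vge, of h k] lv ne hh
      by (intro iffD2[OF hook_char[OF vge]] exI[of _ "length a3 + c2 + 1"]) (auto simp: k_def)
    have fl2: "filter (\<lambda>x. 2 \<le> x) (f xs) = v" unfolding fx using vge by simp
    have cf: "count_list (f xs) 1 = k" unfolding fx
      using vge count_zero[of 1 v] by (fastforce simp: count_rep)
    have mm: "map Suc v = a3" unfolding v_def using a3ge by (induction a3) auto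
    have "g (f xs) = a3 @ replicate c2 2 @ replicate h1 1"
      unfolding g_def fl2 cf mm lv k_def by simp
    then show ?thesis using part hook dec unfolding A_def by simp
  qed
  have gA: "g ys \<in> B \<and> f (g ys) = ys" if yA: "ys \<in> A" for ys
  proof -
    have srt: "sorted_wrt (\<ge>) ys" and pos: "\<forall>x\<in>set ys. 0 < x" and sm: "sum_list ys = n"
      and hk: "has_fixed_hook h 1 ys"
      using yA unfolding A_def partitions_def by auto
    define v where "v = filter (\<lambda>x. 2 \<le> x) ys"
    define m where "m = count_list ys 1"
    have dec: "ys = v @ replicate m 1" using decomp2[OF srt pos] unfolding v_def m_def by simp
    have vge: "\<forall>x\<in>set v. 2 \<le> x" unfolding v_def by simp
    have vs: "sorted_wrt (\<ge>) v" unfolding v_def using srt by (simp add: sorted_wrt_filter)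
    obtain s where s: "length v + 1 \<le> s" "s \<le> length v + m" "int (1 + (length v + m - s)) = int s + h"
      using hk dec hook_char[OF vge] by metis
    define j where "j = s - length v - 1"
    have mj: "m = length v + h1 + 2 * j" using s hh unfolding j_def by linarith
    have gy: "g ys = map Suc v @ replicate j 2 @ replicate h1 1"
      proof -
      have jj: "(count_list ys 1 - length (filter (\<lambda>x. 2 \<le> x) ys) - h1) div 2 = j"
        using mj unfolding m_def v_def by simp
      show ?thesis unfolding g_def jj v_def by simp
    qed
    have sumys: "sum_list ys = sum_list v + m" by (subst dec) (simp add: sum_list_replicate)
    have msge: "\<forall>x\<in>set (map Suc v). 3 \<le> x" using vge by auto
    have part: "g ys \<in> partitions n"
      unfolding partitions_def gy using vs vge sm sumys mj
      by (auto simp: sorted_wrt_append sorted_wrt_map sum_list_replicate sum_Suc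
               elim!: sorted_wrt_mono_rel[rotated])
    have c1: "count_list (g ys) 1 = h1" unfolding gy using msge count_zero[of 1 "map Suc v"]
      by (fastforce simp: count_rep)
    have f3: "filter (\<lambda>x. 3 \<le> x) (g ys) = map Suc v" unfolding gy using msge by simp
    have c2: "count_list (g ys) 2 = j" unfolding gy using msge count_zero[of 2 "map Suc v"]
      by (fastforce simp: count_rep)
    have mm: "map (\<lambda>x. x - 1) (map Suc v) = v" by (induction v) auto
    have "f (g ys) = v @ replicate m 1" unfolding f_def f3 c2 mm using mj by simp
    then show ?thesis using part c1 dec unfolding B_def by simp
  qed
  have "bij_betw f B A"
    by (rule bij_betw_byWitness[where f'=g]) (use fB gA in auto)
  then have "card B = card A" by (rule bij_betw_same_card)
  then show ?thesis unfolding A_def B_def h1_def by simp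
qed
end
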